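(* Let $\mathcal{A}=(A,B,C,S_B,S_C,\Delta_B,\Delta_C)$ be a multiplier Hopf $*$-algebroid with left counit $\varepsilon_B$, right counit $\varepsilon_C$ and antipode $S$. Then $\varepsilon_C\circ *=*\circ S_B\circ\varepsilon_B$, $\varepsilon_B\circ *=*\circ S_C\circ\varepsilon_C$, and $S\circ *\circ S\circ *=\iota_A$.
   Context: All algebras are associative complex algebras, not necessarily unital; $M(A)$ is the two-sided multiplier algebra of a non-degenerate idempotent algebra $A$; if $A$ is a $*$-algebra, $M(A)$ is a $*$-algebra with $T^*a=(a^*T)^*$, $aT^*=(Ta^* )^*$. Multiplier bialgebroid: a tuple $(A,B,C,S_B,S_C,\Delta_B,\Delta_C)$ with $A$ non-degenerate and idempotent, subalgebras $B,C\subseteq M(A)$, anti-isomorphisms $S_B\colon B\to C$, $S_C\colon C\to B$. Quotients of $A\otimes A$: ${}_BA\otimes A^B$ by the span of $xa\otimes b-a\otimes S_B(x)b$; ${}^CA\otimes A_C$ by $aS_C(y)\otimes b-a\otimes by$; $A_B\otimes{}_BA$ by $ax\otimes b-a\otimes xb$; $A_C\otimes{}_CA$ by $ay\otimes b-a\otimes yb$; ${}_CA\otimes A_C$ by $ya\otimes b-a\otimes by$; ${}_BA\otimes A_B$ by $xa\otimes b-a\otimes bx$ ($x\in B,y\in C$). Requirements: $BA=A=S_B(B)A$, $AC=A=AS_C(C)$; ${}_BA\otimes A^B$ non-degenerate as a right module over $A\otimes1$ and $1\otimes A$, ${}^CA\otimes A_C$ non-degenerate as a left module over $A\otimes1$ and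 $1\otimes A$; $\Delta_B$ a homomorphism into the algebra of endomorphisms $T$ of ${}_BA\otimes A^B$ for which $T(a\otimes1),T(1\otimes b)$ exist in ${}_BA\otimes A^B$ with $T(a\otimes b)=T(a\otimes1)(1\otimes b)=T(1\otimes b)(a\otimes1)$; $\Delta_C$ a homomorphism into the algebra of right-acting maps $w\mapsto wT$ on ${}^CA\otimes A_C$ for which $(a\otimes1)T,(1\otimes b)T$ exist with $(a\otimes b)T=(1\otimes b)((a\otimes1)T)=(a\otimes1)((1\otimes b)T)$; $\Delta_B(xyax'y')=(y\otimes x)\Delta_B(a)(y'\otimes x')$, $\Delta_C(xyax'y')=(y\otimes x)\Delta_C(a)(y'\otimes x')$; coassociativities $(\Delta_B\otimes\iota)(\Delta_B(b)(1\otimes c))(a\otimes1\otimes1)=(\iota\otimes\Delta_B)(\Delta_B(b)(a\otimes1))(1\otimes1\otimes c)$, $(a\otimes1\otimes1)((\Delta_C\otimes\iota)((1\otimes c)\Delta_C(b)))=(1\otimes1\otimes c)((\iota\otimes\Delta_C)((a\otimes1)\Delta_C(b)))$, and mixed $((\Delta_B\otimes\iota)((1\otimes c)\Delta_C(b)))(a\otimes1\otimes1)=(1\otimes1\otimes c)((\iota\otimes\Delta_C)(\Delta_B(b)(a\otimes1)))$, $(a\otimes1\otimes1)((\Delta_C\otimes\iota)(\Delta_B(b)(1\otimes c)))=((\iota\otimes\Delta_B)((a\otimes1)\Delta_C(b)))(1\otimes1\otimes c)$. Canonical maps: $T_\lambda(a\otimes b)=\Delta_B(b)(a\otimes1)$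 on ${}_CA\otimes A_C$; $T_\rho(a\otimes b)=\Delta_B(a)(1\otimes b)$ on $A_B\otimes{}_BA$; ${}_\lambda T(a\otimes b)=(a\otimes1)\Delta_C(b)$ on $A_C\otimes{}_CA$; ${}_\rho T(a\otimes b)=(1\otimes b)\Delta_C(a)$ on ${}_BA\otimes A_B$. Left counit $\varepsilon_B\colon A\to B$: $\varepsilon_B(xS_B(x')a)=x\varepsilon_B(a)x'$, $\sum S_B(\varepsilon_B(c_i))d_i=ab$ if $T_\rho(a\otimes b)=\sum c_i\otimes d_i$, $\sum\varepsilon_B(d_i)c_i=ba$ if $T_\lambda(a\otimes b)=\sum c_i\otimes d_i$. Right counit $\varepsilon_C\colon A\to C$: $\varepsilon_C(aS_C(y')y)=y'\varepsilon_C(a)y$, $\sum d_i\varepsilon_C(c_i)=ba$ if ${}_\rho T(a\otimes b)=\sum c_i\otimes d_i$, $\sum c_iS_C(\varepsilon_C(d_i))=ab$ if ${}_\lambda T(a\otimes b)=\sum c_i\otimes d_i$. Regular multiplier Hopf algebroid: all four canonical maps bijective and $S_B(I_B)A=I^BA=A=AS_C(I_C)=A\,{}^CI$, with $I_B,I^B\subseteq B$ spanned by values of $\omega\colon A\to B$ satisfying $\omega(xa)=x\omega(a)$, resp. $\omega(S_B(x)a)=\omega(a)x$, and $I_C,{}^CI\subseteq C$ by values of $\omega\colon A\to C$ with $\omega(ay)=\omega(a)y$, resp. $\omega(aS_C(y))=y\omega(a)$. Its antipode is the unique anti-automorphism $S$ of $A$ with $S(xyax'y')=S_C(y')S_B(x')S(a)S_C(y)S_B(x)$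 and $m(S\otimes\iota)T_\rho(a\otimes b)=S_C(\varepsilon_C(a))b$, $m(\iota\otimes S)\,{}_\lambda T(a\otimes b)=aS_B(\varepsilon_B(b))$; its counits are unique. Multiplier Hopf $*$-algebroid: a regular multiplier Hopf algebroid where $A$ is a $*$-algebra, $B$ and $C$ are $*$-subalgebras of $M(A)$, $S_B\circ*\circ S_C\circ*=\iota_C$ and $S_C\circ*\circ S_B\circ*=\iota_B$, and $\Delta_B(a^* )=\Delta_C(a)^*$ for all $a$, which is equivalent to $( *\otimes* )\circ T_\lambda={}_\lambda T\circ( *\otimes* )$ and $( *\otimes* )\circ T_\rho={}_\rho T\circ( *\otimes* )$, where $*\otimes*$ denotes the conjugate-linear maps $a\otimes b\mapsto a^*\otimes b^*$ between the corresponding balanced tensor products (e.g. ${}_BA\otimes A^B\to{}^CA\otimes A_C$). *)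

theory Defs
  imports Complex_Main
begin

section \<open>Complex algebras (associative, not necessarily unital)\<close>

class calg = ring +
  fixes csc :: "complex \<Rightarrow> 'a \<Rightarrow> 'a"
  assumes csc_add_r: "csc c (a + b) = csc c a + csc c b"
    and csc_add_l: "csc (c + d) a = csc c a + csc d a"
    and csc_assoc: "csc c (csc d a) = csc (c * d) a"
    and csc_one: "csc 1 a = a"
    and csc_mult_l: "csc c a * b = csc c (a * b)"
    and csc_mult_r: "a * csc c b = csc c (a * b)"

text \<open>The algebra A is the whole carrier type 'a. Linear span inside A:\<close>

inductive_set aspan :: "'a::calg set \<Rightarrow> 'a set" for G where
  aspan_zero: "0 \<in> aspan G"
| aspan_gen: "g \<in> G \<Longrightarrow> g \<in> aspan G"
| aspan_add: "f \<in> aspan G \<Longrightarrow> g \<in> aspan G \<Longrightarrow> f + g \<in> aspan G"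
| aspan_scale: "f \<in> aspan G \<Longrightarrow> csc c f \<in> aspan G"

definition nondeg_idem :: "'a::calg itself \<Rightarrow> bool" where
  "nondeg_idem _ \<longleftrightarrow>
     (\<forall>a::'a. (\<forall>b. a * b = 0) \<longrightarrow> a = 0) \<and>
     (\<forall>a::'a. (\<forall>b. b * a = 0) \<longrightarrow> a = 0) \<and>
     (\<forall>a::'a. a \<in> aspan {b * c | b c. True})"

definition star_alg :: "('a::calg \<Rightarrow> 'a) \<Rightarrow> bool" where
  "star_alg st \<longleftrightarrow>
     (\<forall>a b. st (a + b) = st a + st b) \<and>
     (\<forall>c a. st (csc c a) = csc (cnj c) (st a)) \<and>
     (\<forall>a b. st (a * b) = st b * st a) \<and>
     (\<forall>a. st (st a) = a)"

section \<open>Two-sided multipliers\<close>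

text \<open>A multiplier T is a pair (left action a \<mapsto> T a, right action a \<mapsto> a T).\<close>

type_synonym 'a mlt = "('a \<Rightarrow> 'a) \<times> ('a \<Rightarrow> 'a)"

definition lact :: "'a mlt \<Rightarrow> 'a \<Rightarrow> 'a" where "lact T a = fst T a"
definition ract :: "'a \<Rightarrow> 'a mlt \<Rightarrow> 'a" where "ract a T = snd T a"

definition is_multiplier :: "'a::calg mlt \<Rightarrow> bool" where
  "is_multiplier T \<longleftrightarrow>
     (\<forall>a b. lact T (a * b) = lact T a * b) \<and>
     (\<forall>a b. ract (a * b) T = a * ract b T) \<and>
     (\<forall>a b. ract a T * b = a * lact T b)"

definition mmul :: "'a mlt \<Rightarrow> 'a mlt \<Rightarrow> 'a mlt" where
  "mmul S T = (\<lambda>a. lact S (lact T a), \<lambda>a. ract (ract a S) T)"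
definition madd :: "'a::calg mlt \<Rightarrow> 'a mlt \<Rightarrow> 'a mlt" where
  "madd S T = (\<lambda>a. lact S a + lact T a, \<lambda>a. ract a S + ract a T)"
definition mscale :: "complex \<Rightarrow> 'a::calg mlt \<Rightarrow> 'a mlt" where
  "mscale c T = (\<lambda>a. csc c (lact T a), \<lambda>a. csc c (ract a T))"
definition mzero :: "'a::calg mlt" where
  "mzero = (\<lambda>a. 0, \<lambda>a. 0)"
definition mstar :: "('a \<Rightarrow> 'a) \<Rightarrow> 'a mlt \<Rightarrow> 'a mlt" where
  "mstar st T = (\<lambda>a. st (ract (st a) T), \<lambda>a. st (lact T (st a)))"

inductive_set mspan :: "'a::calg mlt set \<Rightarrow> 'a mlt set" for G where
  mspan_zero: "mzero \<in> mspan G"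
| mspan_gen: "g \<in> G \<Longrightarrow> g \<in> mspan G"
| mspan_add: "f \<in> mspan G \<Longrightarrow> g \<in> mspan G \<Longrightarrow> madd f g \<in> mspan G"
| mspan_scale: "f \<in> mspan G \<Longrightarrow> mscale c f \<in> mspan G"

definition subalg :: "'a::calg mlt set \<Rightarrow> bool" where
  "subalg B \<longleftrightarrow> (\<forall>x\<in>B. is_multiplier x) \<and> mzero \<in> B \<and>
     (\<forall>x\<in>B. \<forall>x'\<in>B. madd x x' \<in> B \<and> mmul x x' \<in> B) \<and>
     (\<forall>c. \<forall>x\<in>B. mscale c x \<in> B)"

definition anti_iso :: "'a::calg mlt set \<Rightarrow> 'a mlt set \<Rightarrow> ('a mlt \<Rightarrow> 'a mlt) \<Rightarrow> bool" where
  "anti_iso B C f \<longleftrightarrow> bij_betw f B C \<and>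
     (\<forall>x\<in>B. \<forall>x'\<in>B. f (madd x x') = madd (f x) (f x') \<and> f (mmul x x') = mmul (f x') (f x)) \<and>
     (\<forall>c. \<forall>x\<in>B. f (mscale c x) = mscale c (f x))"

section \<open>Balanced tensor products, as quotients of the free vector space on pairs\<close>

text \<open>A formal sum \<Sum> a_i \<otimes> b_i is a list of pairs; fv sends it to the free vector space.\<close>

definition fv :: "'b list \<Rightarrow> 'b \<Rightarrow> complex" where
  "fv w = (\<lambda>p. of_nat (count_list w p))"

definition delta :: "'b \<Rightarrow> 'b \<Rightarrow> complex" where
  "delta p = (\<lambda>q. if q = p then 1 else 0)"

inductive_set cspan :: "('b \<Rightarrow> complex) set \<Rightarrow> ('b \<Rightarrow> complex) set" for G where
  cspan_zero: "(\<lambda>_. 0) \<in> cspan G"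
| cspan_gen: "g \<in> G \<Longrightarrow> g \<in> cspan G"
| cspan_add: "f \<in> cspan G \<Longrightarrow> g \<in> cspan G \<Longrightarrow> (\<lambda>p. f p + g p) \<in> cspan G"
| cspan_scale: "f \<in> cspan G \<Longrightarrow> (\<lambda>p. c * f p) \<in> cspan G"

definition bil2 :: "('a::calg \<times> 'a \<Rightarrow> complex) set" where
  "bil2 =
    {(\<lambda>p. delta (a + a', b) p - delta (a, b) p - delta (a', b) p) | a a' b. True} \<union>
    {(\<lambda>p. delta (a, b + b') p - delta (a, b) p - delta (a, b') p) | a b b'. True} \<union>
    {(\<lambda>p. delta (csc c a, b) p - c * delta (a, b) p) | c a b. True} \<union>
    {(\<lambda>p. delta (a, csc c b) p - c * delta (a, b) p) | c a b. True}"

definition brel2 :: "(('a \<Rightarrow> 'a) \<times> ('a \<Rightarrow> 'a)) set \<Rightarrow> ('a \<times> 'a \<Rightarrow> complex) set" where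
  "brel2 F = {(\<lambda>p. delta (f a, b) p - delta (a, g b) p) | f g a b. (f, g) \<in> F}"

definition teq2 :: "(('a::calg \<Rightarrow> 'a) \<times> ('a \<Rightarrow> 'a)) set \<Rightarrow> ('a \<times> 'a) list \<Rightarrow> ('a \<times> 'a) list \<Rightarrow> bool" where
  "teq2 F w v \<longleftrightarrow> (\<lambda>p. fv w p - fv v p) \<in> cspan (bil2 \<union> brel2 F)"

definition fBB :: "'a mlt set \<Rightarrow> ('a mlt \<Rightarrow> 'a mlt) \<Rightarrow> (('a \<Rightarrow> 'a) \<times> ('a \<Rightarrow> 'a)) set" where
  \<comment> \<open>_B A \<otimes> A^B : x a \<otimes> b = a \<otimes> S_B(x) b\<close>
  "fBB B SB = {(lact x, lact (SB x)) | x. x \<in> B}"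
definition fCC :: "'a mlt set \<Rightarrow> ('a mlt \<Rightarrow> 'a mlt) \<Rightarrow> (('a \<Rightarrow> 'a) \<times> ('a \<Rightarrow> 'a)) set" where
  \<comment> \<open>^C A \<otimes> A_C : a S_C(y) \<otimes> b = a \<otimes> b y\<close>
  "fCC C SC = {(\<lambda>a. ract a (SC y), \<lambda>b. ract b y) | y. y \<in> C}"
definition fAB :: "'a mlt set \<Rightarrow> (('a \<Rightarrow> 'a) \<times> ('a \<Rightarrow> 'a)) set" where
  \<comment> \<open>A_B \<otimes> _B A : a x \<otimes> b = a \<otimes> x b\<close>
  "fAB B = {(\<lambda>a. ract a x, lact x) | x. x \<in> B}"
definition fAC :: "'a mlt set \<Rightarrow> (('a \<Rightarrow> 'a) \<times> ('a \<Rightarrow> 'a)) set" where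
  \<comment> \<open>A_C \<otimes> _C A : a y \<otimes> b = a \<otimes> y b\<close>
  "fAC C = {(\<lambda>a. ract a y, lact y) | y. y \<in> C}"
definition fCA :: "'a mlt set \<Rightarrow> (('a \<Rightarrow> 'a) \<times> ('a \<Rightarrow> 'a)) set" where
  \<comment> \<open>_C A \<otimes> A_C : y a \<otimes> b = a \<otimes> b y\<close>
  "fCA C = {(lact y, \<lambda>b. ract b y) | y. y \<in> C}"
definition fBA :: "'a mlt set \<Rightarrow> (('a \<Rightarrow> 'a) \<times> ('a \<Rightarrow> 'a)) set" where
  \<comment> \<open>_B A \<otimes> A_B : x a \<otimes> b = a \<otimes> b x\<close>
  "fBA B = {(lact x, \<lambda>b. ract b x) | x. x \<in> B}"

text \<open>Triple tensor products: trilinearity plus balancing F12 between legs 1,2 and F23 between legs 2,3.\<close>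

definition bil3 :: "('a::calg \<times> 'a \<times> 'a \<Rightarrow> complex) set" where
  "bil3 =
    {(\<lambda>p. delta (a + a', b, e) p - delta (a, b, e) p - delta (a', b, e) p) | a a' b e. True} \<union>
    {(\<lambda>p. delta (a, b + b', e) p - delta (a, b, e) p - delta (a, b', e) p) | a b b' e. True} \<union>
    {(\<lambda>p. delta (a, b, e + e') p - delta (a, b, e) p - delta (a, b, e') p) | a b e e'. True} \<union>
    {(\<lambda>p. delta (csc c a, b, e) p - c * delta (a, b, e) p) | c a b e. True} \<union>
    {(\<lambda>p. delta (a, csc c b, e) p - c * delta (a, b, e) p) | c a b e. True} \<union>
    {(\<lambda>p. delta (a, b, csc c e) p - c * delta (a, b, e) p) | c a b e. True}"

definition brel3 :: "(('a \<Rightarrow> 'a) \<times> ('a \<Rightarrow> 'a)) set \<Rightarrow> (('a \<Rightarrow> 'a) \<times> ('a \<Rightarrow> 'a)) set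
    \<Rightarrow> ('a \<times> 'a \<times> 'a \<Rightarrow> complex) set" where
  "brel3 F12 F23 =
    {(\<lambda>p. delta (f a, b, e) p - delta (a, g b, e) p) | f g a b e. (f, g) \<in> F12} \<union>
    {(\<lambda>p. delta (a, f b, e) p - delta (a, b, g e) p) | f g a b e. (f, g) \<in> F23}"

definition teq3 :: "(('a::calg \<Rightarrow> 'a) \<times> ('a \<Rightarrow> 'a)) set \<Rightarrow> (('a \<Rightarrow> 'a) \<times> ('a \<Rightarrow> 'a)) set
    \<Rightarrow> ('a \<times> 'a \<times> 'a) list \<Rightarrow> ('a \<times> 'a \<times> 'a) list \<Rightarrow> bool" where
  "teq3 F12 F23 w v \<longleftrightarrow> (\<lambda>p. fv w p - fv v p) \<in> cspan (bil3 \<union> brel3 F12 F23)"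

definition rt1 :: "('a::calg \<times> 'a) list \<Rightarrow> 'a \<Rightarrow> ('a \<times> 'a) list" where
  "rt1 w a = map (\<lambda>(p, q). (p * a, q)) w"
definition rt2 :: "('a::calg \<times> 'a) list \<Rightarrow> 'a \<Rightarrow> ('a \<times> 'a) list" where
  "rt2 w b = map (\<lambda>(p, q). (p, q * b)) w"
definition lt1 :: "'a::calg \<Rightarrow> ('a \<times> 'a) list \<Rightarrow> ('a \<times> 'a) list" where
  "lt1 a w = map (\<lambda>(p, q). (a * p, q)) w"
definition lt2 :: "'a::calg \<Rightarrow> ('a \<times> 'a) list \<Rightarrow> ('a \<times> 'a) list" where
  "lt2 b w = map (\<lambda>(p, q). (p, b * q)) w"
definition mlt2 :: "'a mlt \<Rightarrow> 'a mlt \<Rightarrow> ('a \<times> 'a) list \<Rightarrow> ('a \<times> 'a) list" where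
  "mlt2 y x w = map (\<lambda>(p, q). (lact y p, lact x q)) w"
definition mrt2 :: "('a \<times> 'a) list \<Rightarrow> 'a mlt \<Rightarrow> 'a mlt \<Rightarrow> ('a \<times> 'a) list" where
  "mrt2 w y x = map (\<lambda>(p, q). (ract p y, ract q x)) w"
definition tsc :: "complex \<Rightarrow> ('a::calg \<times> 'a) list \<Rightarrow> ('a \<times> 'a) list" where
  "tsc c w = map (\<lambda>(p, q). (csc c p, q)) w"
definition star2 :: "('a \<Rightarrow> 'a) \<Rightarrow> ('a \<times> 'a) list \<Rightarrow> ('a \<times> 'a) list" where
  "star2 st w = map (\<lambda>(p, q). (st p, st q)) w"

definition leg1 :: "('a \<Rightarrow> ('a \<times> 'a) list) \<Rightarrow> ('a \<times> 'a) list \<Rightarrow> ('a \<times> 'a \<times> 'a) list" where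
  "leg1 f w = concat (map (\<lambda>(p, q). map (\<lambda>(r, s). (r, s, q)) (f p)) w)"
definition leg2 :: "('a \<Rightarrow> ('a \<times> 'a) list) \<Rightarrow> ('a \<times> 'a) list \<Rightarrow> ('a \<times> 'a \<times> 'a) list" where
  "leg2 f w = concat (map (\<lambda>(p, q). map (\<lambda>(r, s). (p, r, s)) (f q)) w)"

section \<open>Multiplier bialgebroids\<close>

text \<open>Db a is the endomorphism Delta_B(a) of _B A \<otimes> A^B acting on representatives;
  Dc a w is w Delta_C(a) (right action on ^C A \<otimes> A_C).\<close>

type_synonym 'a cop = "'a \<Rightarrow> ('a \<times> 'a) list \<Rightarrow> ('a \<times> 'a) list"

text \<open>Delta_B(b)(a \<otimes> 1), Delta_B(b)(1 \<otimes> c), (a \<otimes> 1)Delta_C(b), (1 \<otimes> c)Delta_C(b).\<close>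

definition lB :: "'a::calg mlt set \<Rightarrow> ('a mlt \<Rightarrow> 'a mlt) \<Rightarrow> 'a cop \<Rightarrow> 'a \<Rightarrow> 'a \<Rightarrow> ('a \<times> 'a) list" where
  "lB B SB Db b a = (SOME u. \<forall>d. teq2 (fBB B SB) (Db b [(a, d)]) (rt2 u d))"
definition rB :: "'a::calg mlt set \<Rightarrow> ('a mlt \<Rightarrow> 'a mlt) \<Rightarrow> 'a cop \<Rightarrow> 'a \<Rightarrow> 'a \<Rightarrow> ('a \<times> 'a) list" where
  "rB B SB Db b c = (SOME u. \<forall>a. teq2 (fBB B SB) (Db b [(a, c)]) (rt1 u a))"
definition lC :: "'a::calg mlt set \<Rightarrow> ('a mlt \<Rightarrow> 'a mlt) \<Rightarrow> 'a cop \<Rightarrow> 'a \<Rightarrow> 'a \<Rightarrow> ('a \<times> 'a) list" where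
  "lC C SC Dc b a = (SOME u. \<forall>d. teq2 (fCC C SC) (Dc b [(a, d)]) (lt2 d u))"
definition rC :: "'a::calg mlt set \<Rightarrow> ('a mlt \<Rightarrow> 'a mlt) \<Rightarrow> 'a cop \<Rightarrow> 'a \<Rightarrow> 'a \<Rightarrow> ('a \<times> 'a) list" where
  "rC C SC Dc b c = (SOME u. \<forall>a. teq2 (fCC C SC) (Dc b [(a, c)]) (lt1 a u))"

definition mult_bialgebroid ::
  "'a::calg mlt set \<Rightarrow> 'a mlt set \<Rightarrow> ('a mlt \<Rightarrow> 'a mlt) \<Rightarrow> ('a mlt \<Rightarrow> 'a mlt) \<Rightarrow> 'a cop \<Rightarrow> 'a cop \<Rightarrow> bool" where
  "mult_bialgebroid B C SB SC Db Dc \<longleftrightarrow>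
    (let FB = fBB B SB; FC = fCC C SC in
     nondeg_idem TYPE('a) \<and> subalg B \<and> subalg C \<and> anti_iso B C SB \<and> anti_iso C B SC \<and>
     \<comment> \<open>BA = A = S_B(B)A, AC = A = AS_C(C)\<close>
     (\<forall>a. a \<in> aspan {lact x b | x b. x \<in> B}) \<and>
     (\<forall>a. a \<in> aspan {lact (SB x) b | x b. x \<in> B}) \<and>
     (\<forall>a. a \<in> aspan {ract b y | y b. y \<in> C}) \<and>
     (\<forall>a. a \<in> aspan {ract b (SC y) | y b. y \<in> C}) \<and>
     \<comment> \<open>non-degeneracy of the module structures\<close>
     (\<forall>w. (\<forall>a. teq2 FB (rt1 w a) []) \<longrightarrow> teq2 FB w []) \<and>
     (\<forall>w. (\<forall>b. teq2 FB (rt2 w b) []) \<longrightarrow> teq2 FB w []) \<and>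
     (\<forall>w. (\<forall>a. teq2 FC (lt1 a w) []) \<longrightarrow> teq2 FC w []) \<and>
     (\<forall>w. (\<forall>b. teq2 FC (lt2 b w) []) \<longrightarrow> teq2 FC w []) \<and>
     \<comment> \<open>each Delta_B(c) is a linear endomorphism of _B A \<otimes> A^B of the required kind\<close>
     (\<forall>c w v. teq2 FB w v \<longrightarrow> teq2 FB (Db c w) (Db c v)) \<and>
     (\<forall>c w v. teq2 FB (Db c (w @ v)) (Db c w @ Db c v)) \<and>
     (\<forall>c k w. teq2 FB (Db c (tsc k w)) (tsc k (Db c w))) \<and>
     (\<forall>c a. \<exists>u. \<forall>b. teq2 FB (Db c [(a, b)]) (rt2 u b)) \<and>
     (\<forall>c b. \<exists>u. \<forall>a. teq2 FB (Db c [(a, b)]) (rt1 u a)) \<and>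
     \<comment> \<open>Delta_B is a homomorphism\<close>
     (\<forall>a b w. teq2 FB (Db (a + b) w) (Db a w @ Db b w)) \<and>
     (\<forall>k a w. teq2 FB (Db (csc k a) w) (tsc k (Db a w))) \<and>
     (\<forall>a b w. teq2 FB (Db (a * b) w) (Db a (Db b w))) \<and>
     \<comment> \<open>each Delta_C(c) is a linear right-acting map on ^C A \<otimes> A_C of the required kind\<close>
     (\<forall>c w v. teq2 FC w v \<longrightarrow> teq2 FC (Dc c w) (Dc c v)) \<and>
     (\<forall>c w v. teq2 FC (Dc c (w @ v)) (Dc c w @ Dc c v)) \<and>
     (\<forall>c k w. teq2 FC (Dc c (tsc k w)) (tsc k (Dc c w))) \<and>
     (\<forall>c a. \<exists>u. \<forall>b. teq2 FC (Dc c [(a, b)]) (lt2 b u)) \<and>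
     (\<forall>c b. \<exists>u. \<forall>a. teq2 FC (Dc c [(a, b)]) (lt1 a u)) \<and>
     \<comment> \<open>Delta_C is a homomorphism (w(T_1 T_2) = (w T_1) T_2)\<close>
     (\<forall>a b w. teq2 FC (Dc (a + b) w) (Dc a w @ Dc b w)) \<and>
     (\<forall>k a w. teq2 FC (Dc (csc k a) w) (tsc k (Dc a w))) \<and>
     (\<forall>a b w. teq2 FC (Dc (a * b) w) (Dc b (Dc a w))) \<and>
     \<comment> \<open>bimodule properties\<close>
     (\<forall>x\<in>B. \<forall>x'\<in>B. \<forall>y\<in>C. \<forall>y'\<in>C. \<forall>a w.
        teq2 FB (Db (ract (ract (lact x (lact y a)) x') y') w) (mlt2 y x (Db a (mlt2 y' x' w))) \<and>
        teq2 FC (Dc (ract (ract (lact x (lact y a)) x') y') w) (mrt2 (Dc a (mrt2 w y x)) y' x')) \<and>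
     \<comment> \<open>coassociativities\<close>
     (\<forall>a b c. teq3 FB FB (leg1 (\<lambda>p. lB B SB Db p a) (rB B SB Db b c))
                         (leg2 (\<lambda>q. rB B SB Db q c) (lB B SB Db b a))) \<and>
     (\<forall>a b c. teq3 FC FC (leg1 (\<lambda>p. lC C SC Dc p a) (rC C SC Dc b c))
                         (leg2 (\<lambda>q. rC C SC Dc q c) (lC C SC Dc b a))) \<and>
     (\<forall>a b c. teq3 FB FC (leg1 (\<lambda>p. lB B SB Db p a) (rC C SC Dc b c))
                         (leg2 (\<lambda>q. rC C SC Dc q c) (lB B SB Db b a))) \<and>
     (\<forall>a b c. teq3 FC FB (leg1 (\<lambda>p. lC C SC Dc p a) (rB B SB Db b c))
                         (leg2 (\<lambda>q. rB B SB Db q c) (lC C SC Dc b a))))"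

section \<open>Canonical maps, counits, regularity, antipode\<close>

definition Tlam :: "'a::calg mlt set \<Rightarrow> ('a mlt \<Rightarrow> 'a mlt) \<Rightarrow> 'a cop \<Rightarrow> ('a \<times> 'a) list \<Rightarrow> ('a \<times> 'a) list" where
  "Tlam B SB Db w = concat (map (\<lambda>(a, b). lB B SB Db b a) w)"
definition Trho :: "'a::calg mlt set \<Rightarrow> ('a mlt \<Rightarrow> 'a mlt) \<Rightarrow> 'a cop \<Rightarrow> ('a \<times> 'a) list \<Rightarrow> ('a \<times> 'a) list" where
  "Trho B SB Db w = concat (map (\<lambda>(a, b). rB B SB Db a b) w)"
definition lamT :: "'a::calg mlt set \<Rightarrow> ('a mlt \<Rightarrow> 'a mlt) \<Rightarrow> 'a cop \<Rightarrow> ('a \<times> 'a) list \<Rightarrow> ('a \<times> 'a) list" where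
  "lamT C SC Dc w = concat (map (\<lambda>(a, b). lC C SC Dc b a) w)"
definition rhoT :: "'a::calg mlt set \<Rightarrow> ('a mlt \<Rightarrow> 'a mlt) \<Rightarrow> 'a cop \<Rightarrow> ('a \<times> 'a) list \<Rightarrow> ('a \<times> 'a) list" where
  "rhoT C SC Dc w = concat (map (\<lambda>(a, b). rC C SC Dc a b) w)"

definition qbij :: "(('a::calg \<Rightarrow> 'a) \<times> ('a \<Rightarrow> 'a)) set \<Rightarrow> (('a \<Rightarrow> 'a) \<times> ('a \<Rightarrow> 'a)) set
    \<Rightarrow> (('a \<times> 'a) list \<Rightarrow> ('a \<times> 'a) list) \<Rightarrow> bool" where
  "qbij Fd Fc T \<longleftrightarrow> (\<forall>w v. teq2 Fc (T w) (T v) \<longrightarrow> teq2 Fd w v) \<and> (\<forall>u. \<exists>w. teq2 Fc (T w) u)"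

definition mlinear :: "('a::calg \<Rightarrow> 'a mlt) \<Rightarrow> bool" where
  "mlinear \<omega> \<longleftrightarrow> (\<forall>a b. \<omega> (a + b) = madd (\<omega> a) (\<omega> b)) \<and> (\<forall>c a. \<omega> (csc c a) = mscale c (\<omega> a))"

definition regular_mult_hopf_algebroid ::
  "'a::calg mlt set \<Rightarrow> 'a mlt set \<Rightarrow> ('a mlt \<Rightarrow> 'a mlt) \<Rightarrow> ('a mlt \<Rightarrow> 'a mlt) \<Rightarrow> 'a cop \<Rightarrow> 'a cop \<Rightarrow> bool" where
  "regular_mult_hopf_algebroid B C SB SC Db Dc \<longleftrightarrow>
    mult_bialgebroid B C SB SC Db Dc \<and>
    qbij (fCA C) (fBB B SB) (Tlam B SB Db) \<and>
    qbij (fAB B) (fBB B SB) (Trho B SB Db) \<and>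
    qbij (fAC C) (fCC C SC) (lamT C SC Dc) \<and>
    qbij (fBA B) (fCC C SC) (rhoT C SC Dc) \<and>
    (let I_B = mspan {\<omega> a | \<omega> a. mlinear \<omega> \<and> (\<forall>a. \<omega> a \<in> B) \<and> (\<forall>x\<in>B. \<forall>a. \<omega> (lact x a) = mmul x (\<omega> a))};
         I'B = mspan {\<omega> a | \<omega> a. mlinear \<omega> \<and> (\<forall>a. \<omega> a \<in> B) \<and> (\<forall>x\<in>B. \<forall>a. \<omega> (lact (SB x) a) = mmul (\<omega> a) x)};
         I_C = mspan {\<omega> a | \<omega> a. mlinear \<omega> \<and> (\<forall>a. \<omega> a \<in> C) \<and> (\<forall>y\<in>C. \<forall>a. \<omega> (ract a y) = mmul (\<omega> a) y)};
         I'C = mspan {\<omega> a | \<omega> a. mlinear \<omega> \<and> (\<forall>a. \<omega> a \<in> C) \<and> (\<forall>y\<in>C. \<forall>a. \<omega> (ract a (SC y)) = mmul y (\<omega> a))}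
     in (\<forall>a. a \<in> aspan {lact (SB x) b | x b. x \<in> I_B}) \<and>
        (\<forall>a. a \<in> aspan {lact x b | x b. x \<in> I'B}) \<and>
        (\<forall>a. a \<in> aspan {ract b (SC y) | y b. y \<in> I_C}) \<and>
        (\<forall>a. a \<in> aspan {ract b y | y b. y \<in> I'C}))"

definition left_counit ::
  "'a::calg mlt set \<Rightarrow> ('a mlt \<Rightarrow> 'a mlt) \<Rightarrow> 'a cop \<Rightarrow> ('a \<Rightarrow> 'a mlt) \<Rightarrow> bool" where
  "left_counit B SB Db eB \<longleftrightarrow>
    (\<forall>a. eB a \<in> B) \<and>
    (\<forall>x\<in>B. \<forall>x'\<in>B. \<forall>a. eB (lact x (lact (SB x') a)) = mmul (mmul x (eB a)) x') \<and>
    (\<forall>a b w. teq2 (fBB B SB) w (rB B SB Db a b) \<longrightarrow>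
       sum_list (map (\<lambda>(c, d). lact (SB (eB c)) d) w) = a * b) \<and>
    (\<forall>a b w. teq2 (fBB B SB) w (lB B SB Db b a) \<longrightarrow>
       sum_list (map (\<lambda>(c, d). lact (eB d) c) w) = b * a)"

definition right_counit ::
  "'a::calg mlt set \<Rightarrow> ('a mlt \<Rightarrow> 'a mlt) \<Rightarrow> 'a cop \<Rightarrow> ('a \<Rightarrow> 'a mlt) \<Rightarrow> bool" where
  "right_counit C SC Dc eC \<longleftrightarrow>
    (\<forall>a. eC a \<in> C) \<and>
    (\<forall>y\<in>C. \<forall>y'\<in>C. \<forall>a. eC (ract (ract a (SC y')) y) = mmul (mmul y' (eC a)) y) \<and>
    (\<forall>a b w. teq2 (fCC C SC) w (rC C SC Dc a b) \<longrightarrow>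
       sum_list (map (\<lambda>(c, d). ract d (eC c)) w) = b * a) \<and>
    (\<forall>a b w. teq2 (fCC C SC) w (lC C SC Dc b a) \<longrightarrow>
       sum_list (map (\<lambda>(c, d). ract c (SC (eC d))) w) = a * b)"

definition antipode ::
  "'a::calg mlt set \<Rightarrow> 'a mlt set \<Rightarrow> ('a mlt \<Rightarrow> 'a mlt) \<Rightarrow> ('a mlt \<Rightarrow> 'a mlt) \<Rightarrow> 'a cop \<Rightarrow> 'a cop
     \<Rightarrow> ('a \<Rightarrow> 'a mlt) \<Rightarrow> ('a \<Rightarrow> 'a mlt) \<Rightarrow> ('a \<Rightarrow> 'a) \<Rightarrow> bool" where
  "antipode B C SB SC Db Dc eB eC S \<longleftrightarrow>
    bij S \<and> (\<forall>a b. S (a + b) = S a + S b) \<and> (\<forall>c a. S (csc c a) = csc c (S a)) \<and>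
    (\<forall>a b. S (a * b) = S b * S a) \<and>
    (\<forall>x\<in>B. \<forall>x'\<in>B. \<forall>y\<in>C. \<forall>y'\<in>C. \<forall>a.
       S (ract (ract (lact x (lact y a)) x') y') =
       lact (SC y') (lact (SB x') (ract (ract (S a) (SC y)) (SB x)))) \<and>
    (\<forall>a b w. teq2 (fBB B SB) w (rB B SB Db a b) \<longrightarrow>
       sum_list (map (\<lambda>(c, d). S c * d) w) = lact (SC (eC a)) b) \<and>
    (\<forall>a b w. teq2 (fCC C SC) w (lC C SC Dc b a) \<longrightarrow>
       sum_list (map (\<lambda>(c, d). c * S d) w) = ract a (SB (eB b)))"

section \<open>Multiplier Hopf *-algebroids\<close>

definition mult_hopf_star_algebroid ::
  "('a::calg \<Rightarrow> 'a) \<Rightarrow> 'a mlt set \<Rightarrow> 'a mlt set \<Rightarrow> ('a mlt \<Rightarrow> 'a mlt) \<Rightarrow> ('a mlt \<Rightarrow> 'a mlt)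
     \<Rightarrow> 'a cop \<Rightarrow> 'a cop \<Rightarrow> bool" where
  "mult_hopf_star_algebroid st B C SB SC Db Dc \<longleftrightarrow>
    regular_mult_hopf_algebroid B C SB SC Db Dc \<and>
    star_alg st \<and>
    (\<forall>x\<in>B. mstar st x \<in> B) \<and> (\<forall>y\<in>C. mstar st y \<in> C) \<and>
    (\<forall>y\<in>C. SB (mstar st (SC (mstar st y))) = y) \<and>
    (\<forall>x\<in>B. SC (mstar st (SB (mstar st x))) = x) \<and>
    \<comment> \<open>Delta_B(a^*) = Delta_C(a)^*, where T^*(w) = ((w^*) T)^*\<close>
    (\<forall>a w. teq2 (fBB B SB) (Db (st a) w) (star2 st (Dc a (star2 st w))))"

end

theory Submission imports Defs begin


lemma cspan_diff: "f \<in> cspan G \<Longrightarrow> g \<in> cspan G \<Longrightarrow> (\<lambda>p. f p - g p) \<in> cspan G"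
proof -
  assume f: "f \<in> cspan G" and g: "g \<in> cspan G"
  have "(\<lambda>p. (-1) * g p) \<in> cspan G" using g by (rule cspan_scale)
  from cspan_add[OF f this] show ?thesis by simp
qed

lemma cspan_eq: "f \<in> cspan G \<Longrightarrow> f = g \<Longrightarrow> g \<in> cspan G" by simp

lemma fv_nil[simp]: "fv [] = (\<lambda>p. 0)" by (simp add: fv_def)
lemma fv_append: "fv (w @ v) p = fv w p + fv v p" by (simp add: fv_def)
lemma fv_cons: "fv (x # w) p = delta x p + fv w p" by (simp add: fv_def delta_def)

lemma teq2_refl: "teq2 F w w"
  unfolding teq2_def by (simp add: cspan_zero)

lemma teq2_sym: "teq2 F w v \<Longrightarrow> teq2 F v w"
  unfolding teq2_def
proof -
  assume "(\<lambda>p. fv w p - fv v p) \<in> cspan (bil2 \<union> brel2 F)"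
  from cspan_scale[OF this, of "-1"] show "(\<lambda>p. fv v p - fv w p) \<in> cspan (bil2 \<union> brel2 F)" by simp
qed

lemma teq2_trans: "teq2 F w v \<Longrightarrow> teq2 F v u \<Longrightarrow> teq2 F w u"
  unfolding teq2_def
proof -
  assume a: "(\<lambda>p. fv w p - fv v p) \<in> cspan (bil2 \<union> brel2 F)"
     and b: "(\<lambda>p. fv v p - fv u p) \<in> cspan (bil2 \<union> brel2 F)"
  from cspan_add[OF a b] show "(\<lambda>p. fv w p - fv u p) \<in> cspan (bil2 \<union> brel2 F)" by simp
qed

lemma teq2_app: "teq2 F w v \<Longrightarrow> teq2 F z z' \<Longrightarrow> teq2 F (w @ z) (v @ z')"
  unfolding teq2_def
proof -
  assume a: "(\<lambda>p. fv w p - fv v p) \<in> cspan (bil2 \<union> brel2 F)"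
     and b: "(\<lambda>p. fv z p - fv z' p) \<in> cspan (bil2 \<union> brel2 F)"
  from cspan_add[OF a b] show "(\<lambda>p. fv (w @ z) p - fv (v @ z') p) \<in> cspan (bil2 \<union> brel2 F)"
    by (simp add: fv_append algebra_simps)
qed

lemma teq2_app_null: "teq2 F z [] \<Longrightarrow> teq2 F (w @ z) w"
  using teq2_app[OF teq2_refl, of F z "[]" w] by simp

definition negl :: "('a::calg \<times> 'a) list \<Rightarrow> ('a \<times> 'a) list" where
  "negl z = map (\<lambda>(c, d). (- c, d)) z"

lemma csc_zero_l: "csc 0 (a::'a::calg) = 0"
proof -
  have "csc 0 a = csc 0 a + csc 0 a" using csc_add_l[of 0 0 a] by simp
  thus ?thesis by simp
qed

lemma delta_pair_neg: "(\<lambda>p. delta (c::'a::calg, d) p + delta (- c, d) p) \<in> cspan (bil2 \<union> X)"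
proof -
  have g1: "(\<lambda>p. delta (c + - c, d) p - delta (c, d) p - delta (- c, d) p) \<in> cspan (bil2 \<union> X)"
    by (rule cspan_gen) (unfold bil2_def, blast)
  have g0: "(\<lambda>p. delta (0 + 0, d) p - delta (0, d) p - delta (0, d) p) \<in> cspan (bil2 \<union> X)"
    by (rule cspan_gen) (unfold bil2_def, blast)
  from cspan_add[OF g1 g0] have "(\<lambda>p. (delta (c + - c, d) p - delta (c, d) p - delta (- c, d) p)
     + (delta (0 + 0, d) p - delta (0, d) p - delta (0, d) p)) \<in> cspan (bil2 \<union> X)" .
  from cspan_scale[OF this, of "-1"] show ?thesis by (simp add: add.commute)
qed

lemma negl_span: "(\<lambda>p. fv (negl z) p + fv z p) \<in> cspan (bil2 \<union> X)"
proof (induction z)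
  case Nil then show ?case by (simp add: negl_def cspan_zero)
next
  case (Cons x z)
  obtain c d where x: "x = (c, d)" by (cases x)
  from cspan_add[OF delta_pair_neg[of c d X] Cons.IH] show ?case
    by (simp add: x negl_def fv_cons algebra_simps)
qed

lemma teq2_negl: "teq2 F z z' \<Longrightarrow> teq2 F (z @ negl z') []"
  unfolding teq2_def
proof -
  assume a: "(\<lambda>p. fv z p - fv z' p) \<in> cspan (bil2 \<union> brel2 F)"
  from cspan_add[OF a negl_span[of z']] show "(\<lambda>p. fv (z @ negl z') p - fv [] p) \<in> cspan (bil2 \<union> brel2 F)"
    by (simp add: fv_append algebra_simps)
qed

lemma teq2_negl_rev: "teq2 F (z @ negl z') [] \<Longrightarrow> teq2 F z z'"
  unfolding teq2_def
proof -
  assume a: "(\<lambda>p. fv (z @ negl z') p - fv [] p) \<in> cspan (bil2 \<union> brel2 F)"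
  from cspan_diff[OF a negl_span[of z']] show "(\<lambda>p. fv z p - fv z' p) \<in> cspan (bil2 \<union> brel2 F)"
    by (simp add: fv_append algebra_simps)
qed

lemma sum_map_app: "sum_list (map f (w @ v)) = sum_list (map f w) + sum_list (map f v)" by simp

lemma null_resp:
  fixes \<phi> :: "'a::calg \<Rightarrow> 'a \<Rightarrow> 'b::ab_group_add"
  assumes N: "\<And>z. teq2 F z [] \<Longrightarrow> sum_list (map (\<lambda>(c, d). \<phi> c d) z) = 0"
    and e: "teq2 F z z'"
  shows "sum_list (map (\<lambda>(c, d). \<phi> c d) z) = sum_list (map (\<lambda>(c, d). \<phi> c d) z')"
proof -
  have neg1: "\<phi> (- c) d = - \<phi> c d" for c d
  proof -
    have "teq2 F ([(c, d)] @ negl [(c, d)]) []" by (rule teq2_negl[OF teq2_refl])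
    from N[OF this] show ?thesis by (simp add: negl_def eq_neg_iff_add_eq_0 add.commute)
  qed
  have sn: "sum_list (map (\<lambda>(c, d). \<phi> c d) (negl v)) = - sum_list (map (\<lambda>(c, d). \<phi> c d) v)" for v
    by (induction v) (auto simp: negl_def neg1)
  from N[OF teq2_negl[OF e]] show ?thesis by (simp add: sn)
qed

lemma cspan_transform:
  assumes h: "h \<in> cspan G"
    and gens: "\<And>g. g \<in> G \<Longrightarrow> (\<lambda>p. cnj (g (\<sigma> p))) \<in> cspan G'"
  shows "(\<lambda>p. cnj (h (\<sigma> p))) \<in> cspan G'"
  using h
proof (induction rule: cspan.induct)
  case cspan_zero then show ?case by (simp add: cspan.cspan_zero)
next
  case (cspan_gen g) then show ?case by (rule gens)
next
  case (cspan_add f g) from cspan.cspan_add[OF cspan_add.IH] show ?case by simp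
next
  case (cspan_scale f c) from cspan.cspan_scale[OF cspan_scale.IH, of "cnj c"] show ?case by simp
qed

lemma delta_inv:
  assumes "\<And>p. \<sigma> (\<sigma> p) = p"
  shows "delta x (\<sigma> p) = delta (\<sigma> x) p"
  unfolding delta_def using assms by metis

lemma star_transport:
  fixes st :: "'a::calg \<Rightarrow> 'a"
  assumes inv: "\<And>a. st (st a) = a" and add: "\<And>a b. st (a + b) = st a + st b"
    and sc: "\<And>c a. st (csc c a) = csc (cnj c) (st a)"
    and FF: "\<And>f g. (f, g) \<in> F \<Longrightarrow> \<exists>f' g'. (f', g') \<in> F' \<and> (\<forall>a. st (f (st a)) = f' a) \<and> (\<forall>a. st (g (st a)) = g' a)"
    and e: "teq2 F w v"
  shows "teq2 F' (star2 st w) (star2 st v)"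
proof -
  define \<sigma> where "\<sigma> = (\<lambda>(p::'a, q::'a). (st p, st q))"
  have si: "\<sigma> (\<sigma> p) = p" for p by (cases p) (simp add: \<sigma>_def inv)
  have ij: "inj \<sigma>" by (metis si injI)
  have s2: "star2 st w = map \<sigma> w" for w by (simp add: star2_def \<sigma>_def)
  have fvs: "fv (star2 st w) p = fv w (\<sigma> p)" for w p
  proof -
    have "count_list (map \<sigma> w) (\<sigma> (\<sigma> p)) = count_list w (\<sigma> p)" by (rule count_list_map_conv[OF ij])
    thus ?thesis by (simp add: fv_def s2 si)
  qed
  have gens: "(\<lambda>p. cnj (g (\<sigma> p))) \<in> cspan (bil2 \<union> brel2 F')" if g: "g \<in> bil2 \<union> brel2 F" for g
  proof -
    have dl: "delta x (\<sigma> p) = delta (\<sigma> x) p" for x p by (rule delta_inv[OF si])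
    have cd: "cnj (delta x p) = delta x p" for x p by (simp add: delta_def)
    have sg: "\<sigma> (a, b) = (st a, st b)" for a b by (simp add: \<sigma>_def)
    from g show ?thesis
    proof
      assume "g \<in> bil2"
      then consider (a1) a a' b where "g = (\<lambda>p. delta (a + a', b) p - delta (a, b) p - delta (a', b) p)"
        | (a2) a b b' where "g = (\<lambda>p. delta (a, b + b') p - delta (a, b) p - delta (a, b') p)"
        | (s1) c a b where "g = (\<lambda>p. delta (csc c a, b) p - c * delta (a, b) p)"
        | (s2) c a b where "g = (\<lambda>p. delta (a, csc c b) p - c * delta (a, b) p)"
        unfolding bil2_def by blast
      then show ?thesis
      proof cases
        case a1
        show ?thesis by (rule cspan_gen) (unfold a1 bil2_def, simp add: dl cd sg add, blast)
      next
        case a2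
        show ?thesis by (rule cspan_gen) (unfold a2 bil2_def, simp add: dl cd sg add, blast)
      next
        case s1
        show ?thesis by (rule cspan_gen) (unfold s1 bil2_def, simp add: dl cd sg sc, blast)
      next
        case s2
        show ?thesis by (rule cspan_gen) (unfold s2 bil2_def, simp add: dl cd sg sc, blast)
      qed
    next
      assume "g \<in> brel2 F"
      then obtain f g0 a b where fg: "(f, g0) \<in> F" and gd: "g = (\<lambda>p. delta (f a, b) p - delta (a, g0 b) p)"
        unfolding brel2_def by blast
      from FF[OF fg] obtain f' g' where f'g': "(f', g') \<in> F'" and ff: "\<forall>a. st (f (st a)) = f' a"
        and gg: "\<forall>a. st (g0 (st a)) = g' a" by blast
      have "st (f a) = f' (st a)" using ff inv by metis
      moreover have "st (g0 b) = g' (st b)" using gg inv by metis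
      ultimately have "(\<lambda>p. cnj (g (\<sigma> p))) = (\<lambda>p. delta (f' (st a), st b) p - delta (st a, g' (st b)) p)"
        by (simp add: gd dl cd sg)
      moreover have "\<dots> \<in> brel2 F'" unfolding brel2_def using f'g' by blast
      ultimately show ?thesis by (simp add: cspan.cspan_gen)
    qed
  qed
  from cspan_transform[OF e[unfolded teq2_def], of \<sigma>, OF gens]
  have "(\<lambda>p. cnj (fv w (\<sigma> p) - fv v (\<sigma> p))) \<in> cspan (bil2 \<union> brel2 F')" by simp
  moreover have "cnj (fv w x - fv v x) = fv w x - fv v x" for x by (simp add: fv_def)
  ultimately show ?thesis unfolding teq2_def by (simp add: fvs)
qed

lemma const_resp:
  fixes \<phi> :: "'a::calg \<Rightarrow> 'a \<Rightarrow> 'b::ab_group_add"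
  assumes K: "\<And>w. teq2 F w w0 \<Longrightarrow> sum_list (map (\<lambda>(c, d). \<phi> c d) w) = k"
    and e: "teq2 F z z'"
  shows "sum_list (map (\<lambda>(c, d). \<phi> c d) z) = sum_list (map (\<lambda>(c, d). \<phi> c d) z')"
proof (rule null_resp[OF _ e])
  fix z assume "teq2 F z []"
  from K[OF teq2_app_null[OF this]] K[OF teq2_refl] show "sum_list (map (\<lambda>(c, d). \<phi> c d) z) = 0" by simp
qed



locale hs =
  fixes st :: "'a::calg \<Rightarrow> 'a"
    and B C :: "'a mlt set"
    and SB SC :: "'a mlt \<Rightarrow> 'a mlt"
    and Db Dc :: "'a cop"
    and eB eC :: "'a \<Rightarrow> 'a mlt"
    and S :: "'a \<Rightarrow> 'a"
  assumes H: "mult_hopf_star_algebroid st B C SB SC Db Dc"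
    and L: "left_counit B SB Db eB"
    and R: "right_counit C SC Dc eC"
    and A: "antipode B C SB SC Db Dc eB eC S"
begin

abbreviation "FB \<equiv> fBB B SB"
abbreviation "FC \<equiv> fCC C SC"

lemma MB: "mult_bialgebroid B C SB SC Db Dc"
  using H unfolding mult_hopf_star_algebroid_def regular_mult_hopf_algebroid_def by simp

lemmas MBc = MB[unfolded mult_bialgebroid_def Let_def]

lemma REG: "regular_mult_hopf_algebroid B C SB SC Db Dc"
  using H unfolding mult_hopf_star_algebroid_def by simp

lemma SA: "star_alg st" using H unfolding mult_hopf_star_algebroid_def by simp

lemma st_inv[simp]: "st (st a) = a" using SA unfolding star_alg_def by simp
lemma st_add: "st (a + b) = st a + st b" using SA unfolding star_alg_def by simp
lemma st_sc: "st (csc c a) = csc (cnj c) (st a)" using SA unfolding star_alg_def by simp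
lemma st_mult: "st (a * b) = st b * st a" using SA unfolding star_alg_def by simp
lemma st_zero[simp]: "st 0 = 0"
proof -
  have "st 0 = st 0 + st 0" using st_add[of 0 0] by simp
  thus ?thesis by simp
qed
lemma st_neg: "st (- a) = - st a"
  using st_add[of a "- a"] by (simp add: eq_neg_iff_add_eq_0 add.commute)

lemma NDI: "nondeg_idem TYPE('a)" using MBc by (elim conjE) assumption
lemma nd1: "(\<And>b. (a::'a) * b = 0) \<Longrightarrow> a = 0"
  using NDI unfolding nondeg_idem_def by blast
lemma nd2: "(\<And>b. b * (a::'a) = 0) \<Longrightarrow> a = 0"
  using NDI unfolding nondeg_idem_def by blast

lemma subB: "subalg B" using MBc by (elim conjE) assumption
lemma subC: "subalg C" using MBc by (elim conjE) assumption
lemma multB: "x \<in> B \<Longrightarrow> is_multiplier x" using subB unfolding subalg_def by blast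
lemma multC: "y \<in> C \<Longrightarrow> is_multiplier y" using subC unfolding subalg_def by blast
lemma isoB: "anti_iso B C SB" using MBc by (elim conjE) assumption
lemma isoC: "anti_iso C B SC" using MBc by (elim conjE) assumption
lemma SB_in: "x \<in> B \<Longrightarrow> SB x \<in> C" using isoB unfolding anti_iso_def bij_betw_def by blast
lemma SC_in: "y \<in> C \<Longrightarrow> SC y \<in> B" using isoC unfolding anti_iso_def bij_betw_def by blast
lemma SB_onto: "y \<in> C \<Longrightarrow> \<exists>x\<in>B. y = SB x" using isoB unfolding anti_iso_def bij_betw_def by blast
lemma SB_inj: "x \<in> B \<Longrightarrow> x' \<in> B \<Longrightarrow> SB x = SB x' \<Longrightarrow> x = x'"
  using isoB unfolding anti_iso_def bij_betw_def inj_on_def by blast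

lemma spanAC': "\<forall>a. a \<in> aspan {ract b y | y b. y \<in> C}" using MBc by (elim conjE) assumption
lemma spanASC': "\<forall>a. a \<in> aspan {ract b (SC y) | y b. y \<in> C}" using MBc by (elim conjE) assumption
lemma spanSBA': "\<forall>a. a \<in> aspan {lact (SB x) b | x b. x \<in> B}" using MBc by (elim conjE) assumption
lemma spanAC: "a \<in> aspan {ract b y | y b. y \<in> C}" using spanAC' by blast
lemma spanASC: "a \<in> aspan {ract b (SC y) | y b. y \<in> C}" using spanASC' by blast
lemma spanSBA: "a \<in> aspan {lact (SB x) b | x b. x \<in> B}" using spanSBA' by blast

lemma ndrt1': "\<forall>w. (\<forall>a. teq2 FB (rt1 w a) []) \<longrightarrow> teq2 FB w []" using MBc by (elim conjE) assumption
lemma ndrt2': "\<forall>w. (\<forall>a. teq2 FB (rt2 w a) []) \<longrightarrow> teq2 FB w []" using MBc by (elim conjE) assumption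
lemma ndlt1': "\<forall>w. (\<forall>a. teq2 FC (lt1 a w) []) \<longrightarrow> teq2 FC w []" using MBc by (elim conjE) assumption
lemma ndlt2': "\<forall>w. (\<forall>a. teq2 FC (lt2 a w) []) \<longrightarrow> teq2 FC w []" using MBc by (elim conjE) assumption
lemma ndrt1: "(\<And>a. teq2 FB (rt1 w a) []) \<Longrightarrow> teq2 FB w []" using ndrt1' by blast
lemma ndrt2: "(\<And>a. teq2 FB (rt2 w a) []) \<Longrightarrow> teq2 FB w []" using ndrt2' by blast
lemma ndlt1: "(\<And>a. teq2 FC (lt1 a w) []) \<Longrightarrow> teq2 FC w []" using ndlt1' by blast
lemma ndlt2: "(\<And>a. teq2 FC (lt2 a w) []) \<Longrightarrow> teq2 FC w []" using ndlt2' by blast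

lemma Db_resp': "\<forall>c w v. teq2 FB w v \<longrightarrow> teq2 FB (Db c w) (Db c v)" using MBc by (elim conjE) assumption
lemma Db_resp: "teq2 FB w v \<Longrightarrow> teq2 FB (Db c w) (Db c v)" using Db_resp' by blast

lemma exDb2': "\<forall>c a. \<exists>u. \<forall>b. teq2 FB (Db c [(a, b)]) (rt2 u b)" using MBc by (elim conjE) assumption
lemma exDb1': "\<forall>c b. \<exists>u. \<forall>a. teq2 FB (Db c [(a, b)]) (rt1 u a)" using MBc by (elim conjE) assumption
lemma exDc2': "\<forall>c a. \<exists>u. \<forall>b. teq2 FC (Dc c [(a, b)]) (lt2 b u)" using MBc by (elim conjE) assumption
lemma exDc1': "\<forall>c b. \<exists>u. \<forall>a. teq2 FC (Dc c [(a, b)]) (lt1 a u)" using MBc by (elim conjE) assumption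
lemma exDb2: "\<exists>u. \<forall>b. teq2 FB (Db c [(a, b)]) (rt2 u b)" using exDb2' by blast
lemma exDb1: "\<exists>u. \<forall>a. teq2 FB (Db c [(a, b)]) (rt1 u a)" using exDb1' by blast
lemma exDc2: "\<exists>u. \<forall>b. teq2 FC (Dc c [(a, b)]) (lt2 b u)" using exDc2' by blast
lemma exDc1: "\<exists>u. \<forall>a. teq2 FC (Dc c [(a, b)]) (lt1 a u)" using exDc1' by blast

lemma lB_spec: "teq2 FB (Db b [(a, d)]) (rt2 (lB B SB Db b a) d)"
  unfolding lB_def using someI_ex[OF exDb2[of b a]] by blast
lemma rB_spec: "teq2 FB (Db b [(a, c)]) (rt1 (rB B SB Db b c) a)"
  unfolding rB_def using someI_ex[OF exDb1[of b c]] by blast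
lemma lC_spec: "teq2 FC (Dc b [(a, d)]) (lt2 d (lC C SC Dc b a))"
  unfolding lC_def using someI_ex[OF exDc2[of b a]] by blast
lemma rC_spec: "teq2 FC (Dc b [(a, c)]) (lt1 a (rC C SC Dc b c))"
  unfolding rC_def using someI_ex[OF exDc1[of b c]] by blast

lemma mstar_B: "x \<in> B \<Longrightarrow> mstar st x \<in> B" using H unfolding mult_hopf_star_algebroid_def by blast
lemma mstar_C: "y \<in> C \<Longrightarrow> mstar st y \<in> C" using H unfolding mult_hopf_star_algebroid_def by blast
lemma SBSC: "y \<in> C \<Longrightarrow> SB (mstar st (SC (mstar st y))) = y" using H unfolding mult_hopf_star_algebroid_def by blast
lemma SCSB: "x \<in> B \<Longrightarrow> SC (mstar st (SB (mstar st x))) = x" using H unfolding mult_hopf_star_algebroid_def by blast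
lemma star_compat: "teq2 FB (Db (st a) w) (star2 st (Dc a (star2 st w)))"
  using H unfolding mult_hopf_star_algebroid_def by blast

lemma Tlam_surj: "\<exists>w. teq2 FB (Tlam B SB Db w) u"
  using REG unfolding regular_mult_hopf_algebroid_def qbij_def by blast
lemma Trho_surj: "\<exists>w. teq2 FB (Trho B SB Db w) u"
  using REG unfolding regular_mult_hopf_algebroid_def qbij_def by blast

lemma lact_mstar: "lact (mstar st T) a = st (ract (st a) T)"
  by (simp add: lact_def ract_def mstar_def)
lemma ract_mstar: "ract a (mstar st T) = st (lact T (st a))"
  by (simp add: lact_def ract_def mstar_def)
lemma mstar_mstar[simp]: "mstar st (mstar st T) = T"
  by (simp add: mstar_def lact_def ract_def)

lemma star2_star2[simp]: "star2 st (star2 st w) = w"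
  by (induction w) (auto simp: star2_def)

lemma starFB: "teq2 FB w v \<Longrightarrow> teq2 FC (star2 st w) (star2 st v)"
proof (rule star_transport[OF st_inv st_add st_sc])
  fix f g assume "(f, g) \<in> FB"
  then obtain x where x: "x \<in> B" "f = lact x" "g = lact (SB x)" unfolding fBB_def by blast
  define y where "y = mstar st (SB x)"
  have y: "y \<in> C" unfolding y_def by (rule mstar_C[OF SB_in[OF x(1)]])
  have sy: "SC y = mstar st x" using SCSB[OF mstar_B[OF x(1)]] by (simp add: y_def)
  have "((\<lambda>a. ract a (SC y)), (\<lambda>b. ract b y)) \<in> FC" unfolding fCC_def using y by blast
  moreover have "\<forall>a. st (f (st a)) = ract a (SC y)" by (simp add: sy x ract_mstar)
  moreover have "\<forall>a. st (g (st a)) = ract a y" by (simp add: y_def x ract_mstar)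
  ultimately show "\<exists>f' g'. (f', g') \<in> FC \<and> (\<forall>a. st (f (st a)) = f' a) \<and> (\<forall>a. st (g (st a)) = g' a)" by blast
qed

lemma starFC: "teq2 FC w v \<Longrightarrow> teq2 FB (star2 st w) (star2 st v)"
proof (rule star_transport[OF st_inv st_add st_sc])
  fix f g assume "(f, g) \<in> FC"
  then obtain y where y: "y \<in> C" "f = (\<lambda>a. ract a (SC y))" "g = (\<lambda>b. ract b y)" unfolding fCC_def by blast
  define x where "x = mstar st (SC y)"
  have x: "x \<in> B" unfolding x_def by (rule mstar_B[OF SC_in[OF y(1)]])
  have sx: "SB x = mstar st y" using SBSC[OF mstar_C[OF y(1)]] by (simp add: x_def)
  have "(lact x, lact (SB x)) \<in> FB" unfolding fBB_def using x by blast
  moreover have "\<forall>a. st (f (st a)) = lact x a" by (simp add: x_def y lact_mstar)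
  moreover have "\<forall>a. st (g (st a)) = lact (SB x) a" by (simp add: sx y lact_mstar)
  ultimately show "\<exists>f' g'. (f', g') \<in> FB \<and> (\<forall>a. st (f (st a)) = f' a) \<and> (\<forall>a. st (g (st a)) = g' a)" by blast
qed

lemma rt1_negl: "rt1 (u @ negl v) p = rt1 u p @ negl (rt1 v p)"
  by (induction v) (auto simp: rt1_def negl_def)
lemma rt2_negl: "rt2 (u @ negl v) p = rt2 u p @ negl (rt2 v p)"
  by (induction v) (auto simp: rt2_def negl_def)
lemma lt1_negl: "lt1 p (u @ negl v) = lt1 p u @ negl (lt1 p v)"
  by (induction v) (auto simp: lt1_def negl_def)
lemma lt2_negl: "lt2 p (u @ negl v) = lt2 p u @ negl (lt2 p v)"
  by (induction v) (auto simp: lt2_def negl_def)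

lemma rt1_uniq: "(\<And>p. teq2 FB (rt1 u p) (rt1 v p)) \<Longrightarrow> teq2 FB u v"
  by (rule teq2_negl_rev, rule ndrt1) (simp add: rt1_negl teq2_negl)
lemma rt2_uniq: "(\<And>p. teq2 FB (rt2 u p) (rt2 v p)) \<Longrightarrow> teq2 FB u v"
  by (rule teq2_negl_rev, rule ndrt2) (simp add: rt2_negl teq2_negl)
lemma lt1_uniq: "(\<And>p. teq2 FC (lt1 p u) (lt1 p v)) \<Longrightarrow> teq2 FC u v"
  by (rule teq2_negl_rev, rule ndlt1) (simp add: lt1_negl teq2_negl)
lemma lt2_uniq: "(\<And>p. teq2 FC (lt2 p u) (lt2 p v)) \<Longrightarrow> teq2 FC u v"
  by (rule teq2_negl_rev, rule ndlt2) (simp add: lt2_negl teq2_negl)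

lemma star2_lt1: "star2 st (lt1 q u) = rt1 (star2 st u) (st q)"
  by (induction u) (auto simp: star2_def lt1_def rt1_def st_mult)
lemma star2_lt2: "star2 st (lt2 q u) = rt2 (star2 st u) (st q)"
  by (induction u) (auto simp: star2_def lt2_def rt2_def st_mult)

lemma rBrC: "teq2 FB (rB B SB Db a b) (star2 st (rC C SC Dc (st a) (st b)))"
proof (rule rt1_uniq)
  fix p
  have 1: "teq2 FB (rt1 (rB B SB Db a b) p) (Db a [(p, b)])" by (rule teq2_sym[OF rB_spec])
  have 2: "teq2 FB (Db a [(p, b)]) (star2 st (Dc (st a) [(st p, st b)]))"
    using star_compat[of "st a" "[(p, b)]"] by (simp add: star2_def)
  have 3: "teq2 FB (star2 st (Dc (st a) [(st p, st b)])) (star2 st (lt1 (st p) (rC C SC Dc (st a) (st b))))"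
    by (rule starFC[OF rC_spec])
  show "teq2 FB (rt1 (rB B SB Db a b) p) (rt1 (star2 st (rC C SC Dc (st a) (st b))) p)"
    using teq2_trans[OF 1 teq2_trans[OF 2 3]] by (simp add: star2_lt1)
qed

lemma lBlC: "teq2 FB (lB B SB Db b a) (star2 st (lC C SC Dc (st b) (st a)))"
proof (rule rt2_uniq)
  fix e
  have 1: "teq2 FB (rt2 (lB B SB Db b a) e) (Db b [(a, e)])" by (rule teq2_sym[OF lB_spec])
  have 2: "teq2 FB (Db b [(a, e)]) (star2 st (Dc (st b) [(st a, st e)]))"
    using star_compat[of "st b" "[(a, e)]"] by (simp add: star2_def)
  have 3: "teq2 FB (star2 st (Dc (st b) [(st a, st e)])) (star2 st (lt2 (st e) (lC C SC Dc (st b) (st a))))"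
    by (rule starFC[OF lC_spec])
  show "teq2 FB (rt2 (lB B SB Db b a) e) (rt2 (star2 st (lC C SC Dc (st b) (st a))) e)"
    using teq2_trans[OF 1 teq2_trans[OF 2 3]] by (simp add: star2_lt2)
qed

lemma mult_ext:
  fixes T T' :: "'a mlt"
  assumes "is_multiplier T" "is_multiplier T'" "\<And>a. lact T a = lact T' a"
  shows "T = T'"
proof -
  have "ract a T = ract a T'" for a
  proof -
    have "(ract a T - ract a T') * b = 0" for b
      using assms unfolding is_multiplier_def by (simp add: algebra_simps)
    from nd1[OF this] show ?thesis by simp
  qed
  with assms(3) show ?thesis by (simp add: lact_def ract_def prod_eq_iff fun_eq_iff)
qed

lemmas Lc = L[unfolded left_counit_def]
lemmas Rc = R[unfolded right_counit_def]
lemmas Ac = A[unfolded antipode_def]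

lemma eB_in: "eB a \<in> B" using Lc by blast
lemma eC_in: "eC a \<in> C" using Rc by blast
lemma L3: "teq2 FB w (rB B SB Db a b) \<Longrightarrow> sum_list (map (\<lambda>(c, d). lact (SB (eB c)) d) w) = a * b"
  using Lc by blast
lemma R3: "teq2 FC w (rC C SC Dc a b) \<Longrightarrow> sum_list (map (\<lambda>(c, d). ract d (eC c)) w) = b * a"
  using Rc by blast
lemma S_bij: "bij S" using Ac by blast
lemma S_add: "S (a + b) = S a + S b" using Ac by blast
lemma S_mult: "S (a * b) = S b * S a" using Ac by blast
lemma S_4: "x \<in> B \<Longrightarrow> x' \<in> B \<Longrightarrow> y \<in> C \<Longrightarrow> y' \<in> C \<Longrightarrow>
       S (ract (ract (lact x (lact y a)) x') y') =
       lact (SC y') (lact (SB x') (ract (ract (S a) (SC y)) (SB x)))" using Ac by blast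
lemma A1: "teq2 FB w (rB B SB Db a b) \<Longrightarrow> sum_list (map (\<lambda>(c, d). S c * d) w) = lact (SC (eC a)) b"
  using Ac by blast
lemma A2: "teq2 FC w (lC C SC Dc b a) \<Longrightarrow> sum_list (map (\<lambda>(c, d). c * S d) w) = ract a (SB (eB b))"
  using Ac by blast

lemma sum_st: "sum_list (map (\<lambda>(c, d). st (f (st c) (st d))) z) = st (sum_list (map (\<lambda>(c, d). f c d) (star2 st z)))"
  by (induction z) (auto simp: star2_def st_add)

lemma sum_Trho: "sum_list (map f (Trho B SB Db w)) = sum_list (map (\<lambda>(a, b). sum_list (map f (rB B SB Db a b))) w)"
  by (induction w) (auto simp: Trho_def)
lemma sum_Tlam: "sum_list (map f (Tlam B SB Db w)) = sum_list (map (\<lambda>(a, b). sum_list (map f (lB B SB Db b a))) w)"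
  by (induction w) (auto simp: Tlam_def)

lemma resp1: "teq2 FB z z' \<Longrightarrow> sum_list (map (\<lambda>(c, d). lact (SB (eB c)) d) z) = sum_list (map (\<lambda>(c, d). lact (SB (eB c)) d) z')"
  by (rule const_resp[OF L3])
lemma respR: "teq2 FC z z' \<Longrightarrow> sum_list (map (\<lambda>(c, d). ract d (eC c)) z) = sum_list (map (\<lambda>(c, d). ract d (eC c)) z')"
  by (rule const_resp[OF R3])
lemma respA1: "teq2 FB z z' \<Longrightarrow> sum_list (map (\<lambda>(c, d). S c * d) z) = sum_list (map (\<lambda>(c, d). S c * d) z')"
  by (rule const_resp[OF A1])
lemma respA2: "teq2 FC z z' \<Longrightarrow> sum_list (map (\<lambda>(c, d). c * S d) z) = sum_list (map (\<lambda>(c, d). c * S d) z')"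
  by (rule const_resp[OF A2])

lemma resp2: "teq2 FB z z' \<Longrightarrow> sum_list (map (\<lambda>(c, d). lact (mstar st (eC (st c))) d) z) = sum_list (map (\<lambda>(c, d). lact (mstar st (eC (st c))) d) z')"
  using sum_st[of "\<lambda>c d. ract d (eC c)"] respR[OF starFB] by (simp add: lact_mstar)

lemma part1_lact: "lact (SB (eB p)) q = lact (mstar st (eC (st p))) q"
proof -
  have each: "sum_list (map (\<lambda>(c, d). lact (SB (eB c)) d) (rB B SB Db a b)) =
              sum_list (map (\<lambda>(c, d). lact (mstar st (eC (st c))) d) (rB B SB Db a b))" for a b
  proof -
    have "sum_list (map (\<lambda>(c, d). lact (mstar st (eC (st c))) d) (rB B SB Db a b)) =
          sum_list (map (\<lambda>(c, d). lact (mstar st (eC (st c))) d) (star2 st (rC C SC Dc (st a) (st b))))"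
      by (rule resp2[OF rBrC])
    also have "\<dots> = st (sum_list (map (\<lambda>(c, d). ract d (eC c)) (rC C SC Dc (st a) (st b))))"
      using sum_st[of "\<lambda>c d. ract d (eC c)" "star2 st (rC C SC Dc (st a) (st b))"] by (simp add: lact_mstar)
    also have "\<dots> = a * b" by (simp add: R3[OF teq2_refl] st_mult)
    finally show ?thesis using L3[OF teq2_refl] by simp
  qed
  obtain w where w: "teq2 FB (Trho B SB Db w) [(p, q)]" using Trho_surj by blast
  have "lact (SB (eB p)) q = sum_list (map (\<lambda>(c, d). lact (SB (eB c)) d) (Trho B SB Db w))"
    using resp1[OF w] by simp
  also have "\<dots> = sum_list (map (\<lambda>(c, d). lact (mstar st (eC (st c))) d) (Trho B SB Db w))"
    unfolding sum_Trho using each by (simp add: case_prod_beta)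
  also have "\<dots> = lact (mstar st (eC (st p))) q" using resp2[OF w] by simp
  finally show ?thesis .
qed

lemma part1: "eC (st a) = mstar st (SB (eB a))"
proof -
  have "SB (eB a) = mstar st (eC (st a))"
    by (rule mult_ext[OF multC[OF SB_in[OF eB_in]] multC[OF mstar_C[OF eC_in]] part1_lact])
  thus ?thesis by simp
qed

lemma part2: "eB (st a) = mstar st (SC (eC a))"
proof -
  define x0 where "x0 = mstar st (eB (st a))"
  have x0: "x0 \<in> B" unfolding x0_def by (rule mstar_B[OF eB_in])
  have "eC a = mstar st (SB (eB (st a)))" using part1[of "st a"] by simp
  hence "mstar st (SB (mstar st x0)) = eC a" by (simp add: x0_def)
  with SCSB[OF x0] have "SC (eC a) = x0" by simp
  thus ?thesis by (simp add: x0_def)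
qed

lemma mr: "is_multiplier T \<Longrightarrow> ract a T * b = a * lact T b"
  unfolding is_multiplier_def by blast
lemma ml: "is_multiplier T \<Longrightarrow> lact T (a * b) = lact T a * b"
  unfolding is_multiplier_def by blast
lemma mrr: "is_multiplier T \<Longrightarrow> ract (a * b) T = a * ract b T"
  unfolding is_multiplier_def by blast

lemma lact_diff: assumes "is_multiplier (T::'a mlt)" shows "lact T (a - b) = lact T a - lact T b"
proof -
  have "c * (lact T (a - b) - (lact T a - lact T b)) = 0" for c
    using mr[OF assms, of c] by (simp add: algebra_simps flip: mr[OF assms])
  from nd2[OF this] show ?thesis by simp
qed
lemma ract_diff: assumes "is_multiplier (T::'a mlt)" shows "ract (a - b) T = ract a T - ract b T"
proof -
  have "(ract (a - b) T - (ract a T - ract b T)) * c = 0" for c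
    by (simp add: algebra_simps mr[OF assms])
  from nd1[OF this] show ?thesis by simp
qed
lemma lact_zero: "is_multiplier (T::'a mlt) \<Longrightarrow> lact T 0 = 0"
  using lact_diff[of T 0 0] by simp

lemma mult_assoc_lr:
  assumes x: "is_multiplier (x::'a mlt)" and x': "is_multiplier x'"
  shows "ract (lact x m) x' = lact x (ract m x')"
proof -
  have "(ract (lact x m) x' - lact x (ract m x')) * b = 0" for b
    by (simp add: algebra_simps mr[OF x'] ml[OF x, symmetric])
  from nd1[OF this] show ?thesis by simp
qed

lemma teq2_gen: "(f, g) \<in> F \<Longrightarrow> teq2 F [(f a, b)] [(a, g b)]"
  unfolding teq2_def
  by (rule cspan_gen) (auto simp: fv_cons brel2_def)

lemma S_zero: "S 0 = 0" using S_add[of 0 0] by simp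
lemma S_diff: "S (a - b) = S a - S b"
proof -
  have "S (a - b) + S b = S a" using S_add[of "a - b" b] by simp
  thus ?thesis by (simp add: algebra_simps)
qed
lemma S_surj: "\<exists>a. e = S a" using S_bij unfolding bij_def surj_def by blast
lemma S_sum: "S (sum_list (map f w)) = sum_list (map (\<lambda>x. S (f x)) w)"
  by (induction w) (auto simp: S_zero S_add)

lemma sum_mult_r: "sum_list (map f w) * (e::'a) = sum_list (map (\<lambda>x. f x * e) w)"
  by (induction w) (auto simp: algebra_simps)
lemma sum_mult_l: "(e::'a) * sum_list (map f w) = sum_list (map (\<lambda>x. e * f x) w)"
  by (induction w) (auto simp: algebra_simps)

lemma S_Bleft: "x \<in> B \<Longrightarrow> S (lact x a) = ract (S a) (SB x)"
proof -
  assume x: "x \<in> B"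
  have "(S (lact x a) - ract (S a) (SB x)) * b = 0" for b
  proof -
    have "(lact x, lact (SB x)) \<in> FB" unfolding fBB_def using x by blast
    from respA1[OF teq2_gen[OF this, of a b]]
    have "S (lact x a) * b = S a * lact (SB x) b" by simp
    thus ?thesis by (simp add: algebra_simps mr[OF multC[OF SB_in[OF x]]])
  qed
  from nd1[OF this] show ?thesis by simp
qed

lemma S_Cright: "y \<in> C \<Longrightarrow> S (ract b y) = lact (SC y) (S b)"
proof -
  assume y: "y \<in> C"
  have "a * (S (ract b y) - lact (SC y) (S b)) = 0" for a
  proof -
    have "((\<lambda>a. ract a (SC y)), (\<lambda>b. ract b y)) \<in> FC" unfolding fCC_def using y by blast
    from respA2[OF teq2_gen[OF this, of a b]]
    have "ract a (SC y) * S b = a * S (ract b y)" by simp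
    thus ?thesis by (simp add: algebra_simps mr[OF multB[OF SC_in[OF y]]])
  qed
  from nd2[OF this] show ?thesis by simp
qed

lemma aspan_mult_zero: "e \<in> aspan G \<Longrightarrow> (\<And>g. g \<in> G \<Longrightarrow> g * E = 0) \<Longrightarrow> e * (E::'a) = 0"
proof (induction rule: aspan.induct)
  case aspan_zero then show ?case by simp
next
  case (aspan_gen g) then show ?case by blast
next
  case (aspan_add f g) then show ?case by (simp add: algebra_simps)
next
  case (aspan_scale f c) then show ?case
    using csc_mult_l[of c f E] csc_add_r[of c 0 0] by simp
qed
lemma aspan_mult_zero2: "e \<in> aspan G \<Longrightarrow> (\<And>g. g \<in> G \<Longrightarrow> E * g = 0) \<Longrightarrow> (E::'a) * e = 0"
proof (induction rule: aspan.induct)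
  case aspan_zero then show ?case by simp
next
  case (aspan_gen g) then show ?case by blast
next
  case (aspan_add f g) then show ?case by (simp add: algebra_simps)
next
  case (aspan_scale f c) then show ?case
    using csc_mult_r[of E c f] csc_add_r[of c 0 0] by simp
qed

lemma cancel_SC: "(\<And>y. y \<in> C \<Longrightarrow> lact (SC y) E = 0) \<Longrightarrow> E = 0"
proof -
  assume h: "\<And>y. y \<in> C \<Longrightarrow> lact (SC y) E = 0"
  have "e * E = 0" for e
    by (rule aspan_mult_zero[OF spanASC]) (auto simp: mr[OF multB[OF SC_in]] h)
  from nd2[OF this] show ?thesis by simp
qed
lemma cancel_SB: "(\<And>x. x \<in> B \<Longrightarrow> ract E (SB x) = 0) \<Longrightarrow> E = 0"
proof -
  assume h: "\<And>x. x \<in> B \<Longrightarrow> ract E (SB x) = 0"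
  have "E * e = 0" for e
    by (rule aspan_mult_zero2[OF spanSBA]) (auto simp: mr[OF multC[OF SB_in], symmetric] h)
  from nd1[OF this] show ?thesis by simp
qed
lemma cancel_C: "(\<And>y. y \<in> C \<Longrightarrow> lact y E = 0) \<Longrightarrow> E = 0"
proof -
  assume h: "\<And>y. y \<in> C \<Longrightarrow> lact y E = 0"
  have "e * E = 0" for e
    by (rule aspan_mult_zero[OF spanAC]) (auto simp: mr[OF multC] h)
  from nd2[OF this] show ?thesis by simp
qed

lemma S_inner:
  assumes x': "x' \<in> B" and y: "y \<in> C"
  shows "S (ract (lact y a) x') = lact (SB x') (ract (S a) (SC y))"
proof -
  define M where "M = S (ract (lact y a) x')"
  define N where "N = lact (SB x') (ract (S a) (SC y))"
  have "M - N = 0"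
  proof (rule cancel_SB)
    fix x assume x: "x \<in> B"
    show "ract (M - N) (SB x) = 0"
    proof (rule cancel_SC)
      fix y' assume y': "y' \<in> C"
      have mx: "is_multiplier x" by (rule multB[OF x])
      have mx': "is_multiplier x'" by (rule multB[OF x'])
      have my': "is_multiplier y'" by (rule multC[OF y'])
      have msb: "is_multiplier (SB x)" by (rule multC[OF SB_in[OF x]])
      have msb': "is_multiplier (SB x')" by (rule multC[OF SB_in[OF x']])
      have msc: "is_multiplier (SC y')" by (rule multB[OF SC_in[OF y']])
      have "S (ract (ract (lact x (lact y a)) x') y') =
            lact (SC y') (lact (SB x') (ract (ract (S a) (SC y)) (SB x)))"
        by (rule S_4[OF x x' y y'])
      moreover have "ract (ract (lact x (lact y a)) x') y' = lact x (ract (ract (lact y a) x') y')"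
        by (simp add: mult_assoc_lr[OF mx mx'] mult_assoc_lr[OF mx my'])
      moreover have "S (lact x (ract (ract (lact y a) x') y')) = lact (SC y') (ract M (SB x))"
        by (simp add: S_Bleft[OF x] S_Cright[OF y'] M_def mult_assoc_lr[OF msc msb])
      moreover have "lact (SB x') (ract (ract (S a) (SC y)) (SB x)) = ract N (SB x)"
        by (simp add: N_def mult_assoc_lr[OF msb' msb])
      ultimately have "lact (SC y') (ract M (SB x)) = lact (SC y') (ract N (SB x))" by simp
      thus "lact (SC y') (ract (M - N) (SB x)) = 0"
        by (simp add: ract_diff[OF msb] lact_diff[OF msc])
    qed
  qed
  thus ?thesis by (simp add: M_def N_def)
qed

lemma S_Cleft:
  assumes y: "y \<in> C"
  shows "S (lact y a1) = ract (S a1) (SC y)"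
proof -
  define D where "D = S (lact y a1) - ract (S a1) (SC y)"
  have "D = 0"
  proof (rule cancel_C)
    fix y'' assume y'': "y'' \<in> C"
    then obtain x' where x': "x' \<in> B" and yx: "y'' = SB x'" using SB_onto by blast
    have msb': "is_multiplier (SB x')" by (rule multC[OF SB_in[OF x']])
    have "e * lact (SB x') D = 0" for e
    proof -
      obtain a3 where a3: "e = S a3" using S_surj by blast
      have P: "lact y a1 * lact x' a3 = ract (lact y a1) x' * a3" by (simp add: mr[OF multB[OF x']])
      have "S (lact y a1 * lact x' a3) = ract (S a3) (SB x') * S (lact y a1)"
        by (simp add: S_mult S_Bleft[OF x'])
      also have "\<dots> = S a3 * lact (SB x') (S (lact y a1))" by (rule mr[OF msb'])
      finally have 1: "S (lact y a1 * lact x' a3) = S a3 * lact (SB x') (S (lact y a1))" .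
      have 2: "S (lact y a1 * lact x' a3) = S a3 * lact (SB x') (ract (S a1) (SC y))"
        unfolding P by (simp add: S_mult S_inner[OF x' y])
      from 1 2 show ?thesis by (simp add: a3 D_def lact_diff[OF msb'] algebra_simps)
    qed
    from nd2[OF this] show "lact y'' D = 0" by (simp add: yx)
  qed
  thus ?thesis by (simp add: D_def)
qed

lemma respX: "teq2 FB z z' \<Longrightarrow> sum_list (map (\<lambda>(c, d). st (S (st d)) * c) z) = sum_list (map (\<lambda>(c, d). st (S (st d)) * c) z')"
proof -
  assume e: "teq2 FB z z'"
  have eq: "sum_list (map (\<lambda>(c, d). st (S (st d)) * c) v) = st (sum_list (map (\<lambda>(c, d). c * S d) (star2 st v)))" for v
    using sum_st[of "\<lambda>c d. c * S d" v] by (simp add: st_mult)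
  show ?thesis unfolding eq using respA2[OF starFB[OF e]] by simp
qed

lemma X_lB: "sum_list (map (\<lambda>(c, d). st (S (st d)) * c) (lB B SB Db b a)) = lact (eC b) a"
proof -
  have "sum_list (map (\<lambda>(c, d). st (S (st d)) * c) (lB B SB Db b a)) =
        sum_list (map (\<lambda>(c, d). st (S (st d)) * c) (star2 st (lC C SC Dc (st b) (st a))))"
    by (rule respX[OF lBlC])
  also have "\<dots> = st (sum_list (map (\<lambda>(c, d). c * S d) (lC C SC Dc (st b) (st a))))"
    using sum_st[of "\<lambda>c d. c * S d" "star2 st (lC C SC Dc (st b) (st a))"] by (simp add: st_mult)
  also have "\<dots> = st (ract (st a) (SB (eB (st b))))" by (simp add: A2[OF teq2_refl])
  also have "\<dots> = lact (eC b) a" using part1[of "st b"] by (simp add: lact_mstar)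
  finally show ?thesis .
qed

lemma rt2_sum: "sum_list (map (\<lambda>(c, d). S c * d) (rt2 u e)) = sum_list (map (\<lambda>(c, d). S c * d) u) * e"
  by (induction u) (auto simp: rt2_def algebra_simps)
lemma rt1_sum: "sum_list (map (\<lambda>(c, d). S c * d) (rt1 u a)) = S a * sum_list (map (\<lambda>(c, d). S c * d) u)"
  by (induction u) (auto simp: rt1_def algebra_simps S_mult)

lemma A1_lB: "sum_list (map (\<lambda>(c, d). S c * d) (lB B SB Db b a)) = ract (S a) (SC (eC b))"
proof -
  have m: "is_multiplier (SC (eC b))" by (rule multB[OF SC_in[OF eC_in]])
  have "(sum_list (map (\<lambda>(c, d). S c * d) (lB B SB Db b a)) - ract (S a) (SC (eC b))) * e = 0" for e
  proof -
    have "sum_list (map (\<lambda>(c, d). S c * d) (lB B SB Db b a)) * e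
          = sum_list (map (\<lambda>(c, d). S c * d) (rt2 (lB B SB Db b a) e))" by (simp add: rt2_sum)
    also have "\<dots> = sum_list (map (\<lambda>(c, d). S c * d) (Db b [(a, e)]))"
      by (rule respA1[OF teq2_sym[OF lB_spec]])
    also have "\<dots> = sum_list (map (\<lambda>(c, d). S c * d) (rt1 (rB B SB Db b e) a))"
      by (rule respA1[OF rB_spec])
    also have "\<dots> = S a * lact (SC (eC b)) e" by (simp add: rt1_sum A1[OF teq2_refl])
    also have "\<dots> = ract (S a) (SC (eC b)) * e" by (simp add: mr[OF m])
    finally show ?thesis by (simp add: algebra_simps)
  qed
  from nd1[OF this] show ?thesis by simp
qed

lemma part3: "S (st (S (st q))) = q"
proof -
  let ?P = "\<lambda>c d. S (st (S (st d)) * c) - S c * d"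
  have sP: "sum_list (map (\<lambda>(c, d). ?P c d) z) =
        S (sum_list (map (\<lambda>(c, d). st (S (st d)) * c) z)) - sum_list (map (\<lambda>(c, d). S c * d) z)" for z
    by (induction z) (auto simp: S_zero S_add algebra_simps)
  have respP: "teq2 FB z z' \<Longrightarrow> sum_list (map (\<lambda>(c, d). ?P c d) z) = sum_list (map (\<lambda>(c, d). ?P c d) z')" for z z'
    unfolding sP using respX respA1 by metis
  have each: "sum_list (map (\<lambda>(c, d). ?P c d) (lB B SB Db b a)) = 0" for a b
    unfolding sP X_lB A1_lB by (simp add: S_Cleft[OF eC_in])
  have "S p * (S (st (S (st q))) - q) = 0" for p
  proof -
    obtain w where w: "teq2 FB (Tlam B SB Db w) [(p, q)]" using Tlam_surj by blast
    have "?P p q = sum_list (map (\<lambda>(c, d). ?P c d) (Tlam B SB Db w))" using respP[OF w] by simp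
    also have "\<dots> = 0" unfolding sum_Tlam using each by (induction w) auto
    finally show ?thesis by (simp add: S_mult algebra_simps)
  qed
  hence "e * (S (st (S (st q))) - q) = 0" for e using S_surj by metis
  from nd2[OF this] show ?thesis by simp
qed

end

theorem proposition6p2:
  fixes st :: "'a::calg \<Rightarrow> 'a"
    and B C :: "'a mlt set"
    and SB SC :: "'a mlt \<Rightarrow> 'a mlt"
    and Db Dc :: "'a cop"
    and eB eC :: "'a \<Rightarrow> 'a mlt"
    and S :: "'a \<Rightarrow> 'a"
  assumes "mult_hopf_star_algebroid st B C SB SC Db Dc"
    and "left_counit B SB Db eB"
    and "right_counit C SC Dc eC"
    and "antipode B C SB SC Db Dc eB eC S"
  shows "(\<forall>a. eC (st a) = mstar st (SB (eB a))) \<and>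
         (\<forall>a. eB (st a) = mstar st (SC (eC a))) \<and>
         (\<forall>a. S (st (S (st a))) = a)"
proof -
  interpret hs st B C SB SC Db Dc eB eC S using assms by (rule hs.intro)
  show ?thesis using part1 part2 part3 by blast
qed

end
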